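(* Let $\mathcal{S} \subseteq M_{m,n}$ be a subspace and let $P_{\mathcal{S}} \in M_n \otimes M_m$ be the orthogonal projection onto $\mathrm{vec}(\mathcal{S}) \subseteq \mathbb{R}^n\otimes\mathbb{R}^m$. Then \[ d(\mathcal{S})^2 \le W^{1+i}_{\max}(P_{\mathcal{S}}). \] In particular, if $W^{1+i}_{\max}(P_{\mathcal{S}}) < 1$ then $\mathcal{S}$ is rank-one-avoiding, i.e. no matrix in $\mathcal{S}$ has rank exactly $1$.
   Context: $M_{m,n}$ denotes real $m\times n$ matrices, $M_n = M_{n,n}$, and $M_n\otimes M_m$ is identified with $M_{nm}$ via the Kronecker product. The vectorization $\mathrm{vec}: M_{m,n}\to\mathbb{R}^n\otimes\mathbb{R}^m = \mathbb{R}^{mn}$ stacks the columns of a matrix on top of one another (first column on top), and $\mathrm{vec}(\mathcal{S}) = \{\mathrm{vec}(Y): Y\in\mathcal{S}\}$. For a subspace $\mathcal{S}$, $d(\mathcal{S}) = \max\{\|Y\| : Y\in\mathcal{S}, \|Y\|_F \le 1\}$, where $\|Y\|$ is the operator norm (largest singular value) and $\|Y\|_F$ the Frobenius norm. For $A = \sum_j X_j \otimes Y_j \in M_n\otimes M_m$, the partial transpose is $A^\Gamma = \sum_j X_j \otimes Y_j^T$. The numerical range of $A\in M_N(\mathbb{C})$ is $W(A) = \{\mathbf{x}^*A\mathbf{x} : \mathbf{x}\in\mathbb{C}^N, \|\mathbf{x}\|=1\}$. For real $B$, $W^{1+i}(B) = \{c\in\mathbb{R} : c(1+i)\in W(B+iB^\Gamma)\}$,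 a nonempty compact interval with maximum $W^{1+i}_{\max}(B)$. *)

theory Defs
  imports "HOL-Analysis.Analysis"
begin

text \<open>Matrices in M_{m,n} are real^'n::finite^'m::finite (Y$i$j: row i::'m, column j::'n).
  R^n (x) R^m is indexed by pairs (j,i) :: 'n::finite \<times> 'm::finite, the Kronecker ordering
  e_j (x) e_i, which is exactly the column-stacking order of vec.
  M_n (x) M_m is real^('n\<times>'m)^('n\<times>'m), with (X (x) Y)$(j,i)$(l,k) = X$j$l * Y$i$k.\<close>

definition vecm :: "real^'n::finite^'m::finite \<Rightarrow> real^('n::finite \<times> 'm::finite)" where
  "vecm Y = (\<chi> p. Y $ snd p $ fst p)"

definition ptrans :: "'a^('n::finite \<times> 'm::finite)^('n::finite \<times> 'm::finite) \<Rightarrow> 'a^('n::finite \<times> 'm::finite)^('n::finite \<times> 'm::finite)" where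
  "ptrans A = (\<chi> p q. A $ (fst p, snd q) $ (fst q, snd p))"

definition is_orth_proj :: "real^'k::finite^'k \<Rightarrow> (real^'k) set \<Rightarrow> bool" where
  "is_orth_proj P V \<longleftrightarrow>
     (\<forall>v. P *v v \<in> V \<and> (\<forall>w\<in>V. (v - P *v v) \<bullet> w = 0))"

definition frob_norm :: "real^'n::finite^'m::finite \<Rightarrow> real" where
  "frob_norm Y = sqrt (\<Sum>i\<in>UNIV. \<Sum>j\<in>UNIV. (Y $ i $ j)\<^sup>2)"

definition op_norm :: "real^'n::finite^'m::finite \<Rightarrow> real" where
  "op_norm Y = onorm (\<lambda>x. Y *v x)"

definition dS :: "(real^'n::finite^'m::finite) set \<Rightarrow> real" where
  "dS S = Sup {op_norm Y | Y. Y \<in> S \<and> frob_norm Y \<le> 1}"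

definition num_range :: "complex^'k::finite^'k \<Rightarrow> complex set" where
  "num_range A = {(\<Sum>r\<in>UNIV. cnj (x $ r) * (A *v x) $ r) | x. norm x = 1}"

definition W1i :: "real^('n::finite \<times> 'm::finite)^('n::finite \<times> 'm::finite) \<Rightarrow> real set" where
  "W1i B = {c. complex_of_real c * (1 + \<i>) \<in>
              num_range (\<chi> p q. complex_of_real (B $ p $ q)
                              + \<i> * complex_of_real (ptrans B $ p $ q))}"

definition W1i_max :: "real^('n::finite \<times> 'm::finite)^('n::finite \<times> 'm::finite) \<Rightarrow> real" where
  "W1i_max B = Sup (W1i B)"

end

theory Submission imports Defs begin

lemma quad_complex:
  fixes B C :: "real^'k::finite^'k" and z :: "real^'k"
  shows "(\<Sum>r\<in>UNIV. cnj ((\<chi> r. complex_of_real (z$r)) $ r) *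
     ((\<chi> p q. complex_of_real (B$p$q) + \<i> * complex_of_real (C$p$q)) *v (\<chi> r. complex_of_real (z$r))) $ r)
   = complex_of_real (\<Sum>r\<in>UNIV. z$r * (\<Sum>q\<in>UNIV. B$r$q * z$q))
     + \<i> * complex_of_real (\<Sum>r\<in>UNIV. z$r * (\<Sum>q\<in>UNIV. C$r$q * z$q))"
  by (simp add: matrix_vector_mult_def sum_distrib_left distrib_left distrib_right sum.distrib algebra_simps)

lemma ptrans_prod:
  fixes B :: "real^('n::finite \<times> 'm::finite)^('n \<times> 'm)" and a :: "real^'m" and b :: "real^'n"
  defines "z \<equiv> (\<chi> p. b $ fst p * a $ snd p) :: real^('n \<times> 'm)"
  shows "(\<Sum>r\<in>UNIV. z$r * (\<Sum>q\<in>UNIV. ptrans B$r$q * z$q)) = (\<Sum>r\<in>UNIV. z$r * (\<Sum>q\<in>UNIV. B$r$q * z$q))"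
proof -
  have "(\<Sum>r\<in>UNIV. z$r * (\<Sum>q\<in>UNIV. ptrans B$r$q * z$q)) = (\<Sum>(r,q)\<in>UNIV\<times>UNIV. z$r * ptrans B$r$q * z$q)"
    by (simp add: sum_distrib_left mult.assoc sum.cartesian_product [of _ UNIV UNIV, symmetric] del: UNIV_Times_UNIV)
  also have "\<dots> = (\<Sum>(r,q)\<in>UNIV\<times>UNIV. z$r * B$r$q * z$q)"
    apply (rule sum.reindex_bij_witness[where i="\<lambda>(r,q). ((fst r, snd q),(fst q, snd r))" and j="\<lambda>(r,q). ((fst r, snd q),(fst q, snd r))"])
    by (auto simp: z_def ptrans_def)
  also have "\<dots> = (\<Sum>r\<in>UNIV. z$r * (\<Sum>q\<in>UNIV. B$r$q * z$q))"
    by (simp add: sum_distrib_left mult.assoc sum.cartesian_product [of _ UNIV UNIV, symmetric] del: UNIV_Times_UNIV)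
  finally show ?thesis .
qed

lemma norm_cvec: "norm ((\<chi> r. complex_of_real (z$r)) :: complex^'k::finite) = norm z"
  by (simp add: norm_vec_def)

lemma inner_mv: "z \<bullet> (B *v z) = (\<Sum>r\<in>UNIV. z$r * (\<Sum>q\<in>UNIV. B$r$q * z$q))"
  by (simp add: inner_vec_def matrix_vector_mult_def)

lemma prod_in_W1i:
  fixes B :: "real^('n::finite \<times> 'm::finite)^('n \<times> 'm)" and a :: "real^'m" and b :: "real^'n"
  assumes z: "z = (\<chi> p. b $ fst p * a $ snd p)" and n1: "norm z = 1"
  shows "z \<bullet> (B *v z) \<in> W1i B"
proof -
  let ?xc = "(\<chi> r. complex_of_real (z$r)) :: complex^('n\<times>'m)"
  have "complex_of_real (z \<bullet> (B *v z)) * (1 + \<i>) = (\<Sum>r\<in>UNIV. cnj (?xc $ r) *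
     ((\<chi> p q. complex_of_real (B$p$q) + \<i> * complex_of_real (ptrans B$p$q)) *v ?xc) $ r)"
    unfolding quad_complex inner_mv z ptrans_prod by (simp add: algebra_simps)
  moreover have "norm ?xc = 1" using n1 norm_cvec by metis
  ultimately show ?thesis unfolding W1i_def num_range_def by blast
qed

lemma W1i_bdd: "bdd_above (W1i (B:: real^('n::finite \<times> 'm::finite)^('n \<times> 'm)))"
proof -
  define A where "A = (\<chi> p q. complex_of_real (B $ p $ q) + \<i> * complex_of_real (ptrans B $ p $ q))"
  define K where "K = (\<Sum>r\<in>UNIV. \<Sum>q\<in>UNIV. norm (A$r$q))"
  have "c \<le> K" if cW: "c \<in> W1i B" for c
  proof -
    obtain x :: "complex^('n\<times>'m)" where x: "norm x = 1" and e: "complex_of_real c * (1 + \<i>) = (\<Sum>r\<in>UNIV. cnj (x $ r) * (A *v x) $ r)"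
    proof -
      have "complex_of_real c * (1 + \<i>) \<in> num_range A" using cW by (simp add: W1i_def A_def)
      then show ?thesis using that unfolding num_range_def by blast
    qed
    have xr: "norm (x$r) \<le> 1" for r using Finite_Cartesian_Product.norm_nth_le[of x r] x by simp
    have "c = Re (complex_of_real c * (1 + \<i>))" by simp
    also have "\<dots> \<le> norm (\<Sum>r\<in>UNIV. cnj (x $ r) * (A *v x) $ r)" using e complex_Re_le_cmod by metis
    also have "\<dots> \<le> (\<Sum>r\<in>UNIV. norm (cnj (x $ r) * (A *v x) $ r))" by (rule norm_sum)
    also have "\<dots> \<le> (\<Sum>r\<in>UNIV. norm ((A *v x) $ r))"
      apply (rule sum_mono) apply (simp add: norm_mult)
      by (metis xr mult_left_le_one_le norm_ge_zero)
    also have "\<dots> \<le> (\<Sum>r\<in>UNIV. \<Sum>q\<in>UNIV. norm (A$r$q))"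
    proof (rule sum_mono)
      fix r
      have "norm ((A *v x) $ r) \<le> (\<Sum>q\<in>UNIV. norm (A$r$q * x$q))"
        unfolding matrix_vector_mult_def by (simp add: norm_sum)
      also have "\<dots> \<le> (\<Sum>q\<in>UNIV. norm (A$r$q))"
        apply (rule sum_mono) apply (simp add: norm_mult)
        by (metis xr mult_right_le_one_le norm_ge_zero)
      finally show "norm ((A *v x) $ r) \<le> (\<Sum>q\<in>UNIV. norm (A$r$q))" .
    qed
    finally show ?thesis unfolding K_def .
  qed
  thus ?thesis by (auto simp: bdd_above_def)
qed


lemma linear_vecm: "linear (vecm :: real^'n::finite^'m::finite \<Rightarrow> _)"
  by (auto simp: linear_iff vecm_def vec_eq_iff)

lemma vecm_eq0: "vecm Y = 0 \<Longrightarrow> Y = 0"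
  by (auto simp: vecm_def vec_eq_iff)

lemma sum_pairs: "(\<Sum>p\<in>(UNIV::('n::finite\<times>'m::finite) set). f p) = (\<Sum>j\<in>UNIV. \<Sum>i\<in>UNIV. f (j,i))"
  using sum.cartesian_product'[of f UNIV UNIV] by simp

lemma inner_vecm_prod:
  fixes Y :: "real^'n::finite^'m::finite"
  shows "vecm Y \<bullet> (\<chi> p. u $ fst p * y $ snd p) = y \<bullet> (Y *v u)"
  unfolding inner_vec_def sum_pairs vecm_def matrix_vector_mult_def
  apply (simp add: sum_distrib_left sum_distrib_right mult_ac)
  apply (subst sum.swap) apply (simp add: mult_ac)
  done

lemma inner_prod_prod:
  shows "((\<chi> p. u $ fst p * y $ snd p) :: real^('n::finite\<times>'m::finite)) \<bullet> (\<chi> p. u $ fst p * y $ snd p) = (u \<bullet> u) * (y \<bullet> y)"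
  unfolding inner_vec_def sum_pairs
  by (simp add: sum_distrib_left sum_distrib_right mult_ac sum_product)

lemma frob_vecm: "frob_norm Y = norm (vecm Y)"
  unfolding frob_norm_def norm_vec_def L2_set_def vecm_def sum_pairs
  apply simp apply (subst sum.swap) apply simp done

lemma prod_bound:
  fixes B :: "real^('n::finite \<times> 'm::finite)^('n \<times> 'm)" and a :: "real^'m" and b :: "real^'n"
  assumes z: "z = (\<chi> p. b $ fst p * a $ snd p)"
  shows "z \<bullet> (B *v z) \<le> (z \<bullet> z) * W1i_max B"
proof (cases "z = 0")
  case True then show ?thesis by simp
next
  case False
  hence nz: "norm z > 0" by simp
  define x where "x = (1 / norm z) *\<^sub>R z"
  have xz: "x = (\<chi> p. ((1 / norm z) *\<^sub>R b) $ fst p * a $ snd p)"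
    unfolding x_def z by (simp add: vec_eq_iff)
  have "norm x = 1" unfolding x_def using nz by simp
  hence "x \<bullet> (B *v x) \<in> W1i B" using prod_in_W1i[OF xz] by blast
  hence le: "x \<bullet> (B *v x) \<le> W1i_max B" unfolding W1i_max_def by (rule cSup_upper[OF _ W1i_bdd])
  have eq: "z = norm z *\<^sub>R x" unfolding x_def using nz by simp
  have "z \<bullet> (B *v z) = (norm z *\<^sub>R x) \<bullet> (B *v (norm z *\<^sub>R x))"
    using eq by metis
  also have "\<dots> = (norm z)\<^sup>2 * (x \<bullet> (B *v x))"
    by (simp add: matrix_vector_mult_scaleR power2_eq_square)
  also have "\<dots> \<le> (norm z)\<^sup>2 * W1i_max B" using le by (simp add: mult_left_mono)
  finally show ?thesis by (simp add: power2_norm_eq_inner)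
qed

theorem theorem4p1:
  fixes S :: "(real^'n^'m) set" and P :: "real^('n \<times> 'm)^('n \<times> 'm)"
  assumes "subspace S"
    and "is_orth_proj P (vecm ` S)"
  shows "(dS S)\<^sup>2 \<le> W1i_max P
         \<and> (W1i_max P < 1 \<longrightarrow> (\<forall>Y\<in>S. rank Y \<noteq> 1))"
proof -
  let ?V = "vecm ` S"
  let ?W = "W1i_max P"
  have subV: "subspace ?V" using linear_subspace_image[OF linear_vecm assms(1)] .
  have PV: "P *v v \<in> ?V" and orth: "\<And>w. w \<in> ?V \<Longrightarrow> (v - P *v v) \<bullet> w = 0" for v
    using assms(2) unfolding is_orth_proj_def by auto
  have fixV: "P *v v = v" if "v \<in> ?V" for v
  proof -
    have "v - P *v v \<in> ?V" using subV that PV subspace_diff by blast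
    hence "(v - P *v v) \<bullet> (v - P *v v) = 0" using orth by blast
    thus ?thesis by simp
  qed
  have quad: "z \<bullet> (P *v z) = (P *v z) \<bullet> (P *v z)" for z
  proof -
    have "(z - P *v z) \<bullet> (P *v z) = 0" using orth PV by blast
    thus ?thesis by (simp add: inner_diff_left)
  qed
  have Wnn: "?W \<ge> 0"
  proof -
    define e where "e = (1::real^('n\<times>'m))"
    have one: "e = (\<chi> p. (1::real^'n) $ fst p * (1::real^'m) $ snd p)"
      by (simp add: vec_eq_iff e_def)
    have a1: "e \<bullet> (P *v e) \<le> (e \<bullet> e) * ?W" using prod_bound[where B=P, OF one] .
    have a2: "e \<bullet> (P *v e) \<ge> 0" using quad by simp
    have a3: "e \<bullet> e > 0" by (simp add: e_def)
    show ?thesis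
    proof (rule ccontr)
      assume "\<not> ?thesis"
      hence "(e \<bullet> e) * ?W < 0" using a3 by (simp add: mult_pos_neg)
      thus False using a1 a2 by linarith
    qed
  qed
  have opb: "op_norm Y \<le> sqrt ?W" if Y: "Y \<in> S" "frob_norm Y \<le> 1" for Y
    unfolding op_norm_def
  proof (rule onorm_le)
    fix u :: "real^'n"
    define y where "y = Y *v u"
    define z where "z = ((\<chi> p. u $ fst p * y $ snd p) :: real^('n\<times>'m))"
    have nY: "norm (vecm Y) \<le> 1" using Y frob_vecm by metis
    have s1: "y \<bullet> y = vecm Y \<bullet> (P *v z)"
    proof -
      have "vecm Y \<in> ?V" using Y by blast
      hence "(z - P *v z) \<bullet> vecm Y = 0" using orth by blast
      moreover have "(z - P *v z) \<bullet> vecm Y = z \<bullet> vecm Y - (P *v z) \<bullet> vecm Y" by (rule inner_diff_left)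
      moreover have "z \<bullet> vecm Y = vecm Y \<bullet> z" "(P *v z) \<bullet> vecm Y = vecm Y \<bullet> (P *v z)" by (simp_all add: inner_commute)
      ultimately have "vecm Y \<bullet> (P *v z) = vecm Y \<bullet> z" by linarith
      thus ?thesis unfolding z_def inner_vecm_prod y_def by simp
    qed
    have "\<bar>vecm Y \<bullet> (P *v z)\<bar> \<le> norm (vecm Y) * norm (P *v z)" by (rule Cauchy_Schwarz_ineq2)
    also have "\<dots> \<le> norm (P *v z)" using nY by (simp add: mult_left_le_one_le)
    finally have "(y \<bullet> y)\<^sup>2 \<le> (norm (P *v z))\<^sup>2"
      using s1 by (metis abs_le_square_iff abs_norm_cancel)
    also have "\<dots> = z \<bullet> (P *v z)" using quad by (simp add: power2_norm_eq_inner)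
    also have "\<dots> \<le> (z \<bullet> z) * ?W" by (rule prod_bound[OF z_def])
    also have "\<dots> = (u \<bullet> u) * (y \<bullet> y) * ?W" unfolding z_def inner_prod_prod ..
    finally have key: "(y \<bullet> y)\<^sup>2 \<le> (u \<bullet> u) * (y \<bullet> y) * ?W" .
    have "(norm y)\<^sup>2 \<le> (sqrt ?W * norm u)\<^sup>2"
    proof (cases "y \<bullet> y = 0")
      case True thus ?thesis by (simp add: power2_norm_eq_inner)
    next
      case False
      hence pos: "y \<bullet> y > 0" by (simp add: order_le_neq_trans)
      have "(y \<bullet> y) * (y \<bullet> y) \<le> ((u \<bullet> u) * ?W) * (y \<bullet> y)"
        using key by (simp add: power2_eq_square mult_ac)
      hence "y \<bullet> y \<le> (u \<bullet> u) * ?W" using pos by simp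
      moreover have "(sqrt ?W * norm u)\<^sup>2 = ?W * (u \<bullet> u)" using Wnn
        by (simp add: power_mult_distrib power2_norm_eq_inner)
      moreover have "(norm y)\<^sup>2 = y \<bullet> y" by (rule power2_norm_eq_inner)
      ultimately show ?thesis by (simp add: mult.commute)
    qed
    moreover have "0 \<le> sqrt ?W * norm u" using Wnn by simp
    ultimately have "norm y \<le> sqrt ?W * norm u" by (rule power2_le_imp_le)
    thus "norm (Y *v u) \<le> sqrt ?W * norm u" unfolding y_def .
  qed
  define T where "T = {op_norm Y | Y. Y \<in> S \<and> frob_norm Y \<le> 1}"
  have z0: "(\<lambda>x. (0::real^'n^'m) *v x) = (\<lambda>x. 0)" by (simp add: fun_eq_iff vec_eq_iff matrix_vector_mult_def)
  have 0: "op_norm (0::real^'n^'m) = 0" unfolding op_norm_def z0 by (rule onorm_zero)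
  have S0: "0 \<in> S" using assms(1) subspace_0 by blast
  have fr0: "frob_norm (0::real^'n^'m) \<le> 1" 
  proof -
    have "vecm (0::real^'n^'m) = 0" by (simp add: vecm_def vec_eq_iff)
    thus ?thesis by (simp add: frob_vecm)
  qed
  have T0: "0 \<in> T" unfolding T_def using 0 S0 fr0 by force
  have Tb: "\<And>t. t \<in> T \<Longrightarrow> t \<le> sqrt ?W" unfolding T_def using opb by blast
  have "dS S = Sup T" unfolding dS_def T_def ..
  hence d1: "dS S \<le> sqrt ?W" using Tb T0 by (metis cSup_least empty_iff)
  have d0: "dS S \<ge> 0" using `dS S = Sup T` T0 Tb by (metis bdd_above_def cSup_upper)
  have part1: "(dS S)\<^sup>2 \<le> ?W" using d0 d1 Wnn by (metis power_mono real_sqrt_pow2)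
  have part2: "rank Y \<noteq> 1" if W1: "?W < 1" and Y: "Y \<in> S" for Y
  proof
    assume r: "rank Y = 1"
    obtain Bs where Bs: "Bs \<subseteq> rows Y" "independent Bs" "rows Y \<subseteq> span Bs" "card Bs = dim (rows Y)"
      by (rule basis_exists)
    have "dim (rows Y) = 1" using r by (simp only: row_rank_def)
    hence "card Bs = Suc 0" using Bs(4) by simp
    then obtain u where u: "Bs = {u}" unfolding card_1_singleton_iff by blast
    have ex: "\<forall>i. \<exists>k. Y $ i = k *\<^sub>R u"
    proof
      fix i
      have "row i Y \<in> rows Y" unfolding rows_def by blast
      hence "row i Y \<in> span {u}" using Bs u by blast
      moreover have "row i Y = Y $ i" by (simp add: row_def vec_eq_iff)
      ultimately have "Y $ i \<in> range (\<lambda>k. k *\<^sub>R u)" by (simp only: span_singleton)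
      thus "\<exists>k. Y $ i = k *\<^sub>R u" by blast
    qed
    obtain k where k: "\<forall>i. Y $ i = k i *\<^sub>R u" using choice[OF ex] by blast
    have Y0: "Y \<noteq> 0"
    proof
      assume "Y = 0" with r show False by simp
    qed
    hence nz: "vecm Y \<noteq> 0" using vecm_eq0 by blast
    hence nzp: "norm (vecm Y) > 0" by simp
    define x where "x = (1 / norm (vecm Y)) *\<^sub>R vecm Y"
    have "vecm Y \<in> ?V" using Y by blast
    hence xV: "x \<in> ?V" unfolding x_def by (rule subspace_scale[OF subV])
    have x1: "norm x = 1" unfolding x_def using nzp by simp
    have xp: "x = (\<chi> p. ((1 / norm (vecm Y)) *\<^sub>R u) $ fst p * (\<chi> i. k i) $ snd p)"
      unfolding x_def vecm_def by (simp add: vec_eq_iff k)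
    have "x \<bullet> (P *v x) \<in> W1i P" by (rule prod_in_W1i[OF xp x1])
    moreover have "x \<bullet> (P *v x) = 1" using fixV[OF xV] x1 by (simp add: dot_square_norm)
    ultimately have "1 \<le> ?W" unfolding W1i_max_def by (metis cSup_upper[OF _ W1i_bdd])
    thus False using W1 by simp
  qed
  show ?thesis using part1 part2 by blast
qed

end
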